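(* Let $\mathcal{R}:L^2(\mathcal{X},\mathcal{V},\hat P)\to\mathbb{R}$ be $\lambda$-strongly convex and $\Lambda$-strongly smooth, let $\mathcal{H}\subset L^2(\mathcal{X},\mathcal{V},\hat P)$ be a restriction set with edge $\gamma$, and let $f^*=\operatorname{argmin}_{f}\mathcal{R}[f]$. Given a starting point $f_0$ and constant step size $\eta_t=\frac1\Lambda$, after $T$ iterations of the Naive Gradient Projection Algorithm the iterate $f_T$ satisfies $$\mathcal{R}[f_T]-\mathcal{R}[f^*]\le\left(1-\frac{\gamma^2\lambda}{\Lambda}\right)^T\left(\mathcal{R}[f_0]-\mathcal{R}[f^*]\right).$$
   Context: $L^2(\mathcal{X},\mathcal{V},\hat P)$: for training points $x_1,\dots,x_N\in\mathcal{X}$ and a real inner-product space $\mathcal{V}$, the Hilbert space of (equivalence classes of) functions $f:\mathcal{X}\to\mathcal{V}$ with inner product $\langle f,g\rangle=\frac1N\sum_{n=1}^N\langle f(x_n),g(x_n)\rangle_{\mathcal{V}}$ and norm $\|f\|=\sqrt{\langle f,f\rangle}$. A subgradient of $\mathcal{R}$ at $f$ is any $\nabla$ with $\mathcal{R}[g]\ge\mathcal{R}[f]+\langle g-f,\nabla\rangle$ for all $g$; $\nabla\mathcal{R}[f]$ denotes a (the set of) subgradient(s). $\mathcal{R}$ is $\lambda$-strongly convex if $\mathcal{R}[f']\ge\mathcal{R}[f]+\langle\nabla\mathcal{R}[f],f'-f\rangle+\frac\lambda2\|f'-f\|^2$ for all $f,f'$, and $\Lambda$-strongly smooth if $\mathcal{R}[f']\le\mathcal{R}[f]+\langle\nabla\mathcal{R}[f],f'-f\rangle+\frac\Lambda2\|f'-f\|^2$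 for all $f,f'$ ($\lambda,\Lambda>0$). Edge: a set $\mathcal{H}$ has edge $\gamma\in[0,1]$ if for every $g$ there exists $h\in\mathcal{H}$ such that either $\langle g,h\rangle\ge\gamma\|g\|\|h\|$ or $\|g-h\|^2\le(1-\gamma^2)\|g\|^2$. Projecting $g$ onto $\mathcal{H}$: choosing $h^*\in\mathcal{H}$ either as a maximizer of $\langle g,h\rangle/\|h\|$ over $h\in\mathcal{H}$, or, when $\mathcal{H}$ is closed under scalar multiplication, as a minimizer of $\|g-h\|^2$ over $h\in\mathcal{H}$ (minimizers/maximizers assumed to exist). Naive Gradient Projection Algorithm: given $f_0$ and step sizes $\eta_t$, for $t=1,\dots,T$: compute a subgradient $\nabla_t\in\nabla\mathcal{R}[f_{t-1}]$, project $\nabla_t$ onto $\mathcal{H}$ obtaining $h^*$, and set $f_t=f_{t-1}-\eta_t\frac{\langle h^*,\nabla_t\rangle}{\|h^*\|^2}h^*$. *)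

theory Defs
  imports "HOL-Analysis.Analysis"
begin

text \<open>Empirical L2 space over training points xs 0, ..., xs (N-1); elements are
  represented by functions 'x => 'v (equivalence = agreement on the points).\<close>

definition l2_inner :: "nat \<Rightarrow> (nat \<Rightarrow> 'x) \<Rightarrow> ('x \<Rightarrow> 'v::real_inner) \<Rightarrow> ('x \<Rightarrow> 'v) \<Rightarrow> real" where
  "l2_inner N xs f g = (1 / real N) * (\<Sum>n<N. inner (f (xs n)) (g (xs n)))"

definition l2_norm :: "nat \<Rightarrow> (nat \<Rightarrow> 'x) \<Rightarrow> ('x \<Rightarrow> 'v::real_inner) \<Rightarrow> real" where
  "l2_norm N xs f = sqrt (l2_inner N xs f f)"

definition subgradients ::
  "nat \<Rightarrow> (nat \<Rightarrow> 'x) \<Rightarrow> (('x \<Rightarrow> 'v::real_inner) \<Rightarrow> real) \<Rightarrow> ('x \<Rightarrow> 'v) \<Rightarrow> ('x \<Rightarrow> 'v) set" where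
  "subgradients N xs R f = {d. \<forall>g. R g \<ge> R f + l2_inner N xs (g - f) d}"

definition strongly_convex ::
  "nat \<Rightarrow> (nat \<Rightarrow> 'x) \<Rightarrow> real \<Rightarrow> (('x \<Rightarrow> 'v::real_inner) \<Rightarrow> real) \<Rightarrow> bool" where
  "strongly_convex N xs lam R \<longleftrightarrow>
     (\<forall>f f'. \<forall>d \<in> subgradients N xs R f.
        R f' \<ge> R f + l2_inner N xs d (f' - f) + lam / 2 * (l2_norm N xs (f' - f))\<^sup>2)"

definition strongly_smooth ::
  "nat \<Rightarrow> (nat \<Rightarrow> 'x) \<Rightarrow> real \<Rightarrow> (('x \<Rightarrow> 'v::real_inner) \<Rightarrow> real) \<Rightarrow> bool" where
  "strongly_smooth N xs Lam R \<longleftrightarrow>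
     (\<forall>f f'. \<forall>d \<in> subgradients N xs R f.
        R f' \<le> R f + l2_inner N xs d (f' - f) + Lam / 2 * (l2_norm N xs (f' - f))\<^sup>2)"

text \<open>Edge: the first alternative (cosine bound) is read with h nonzero.\<close>
definition has_edge ::
  "nat \<Rightarrow> (nat \<Rightarrow> 'x) \<Rightarrow> ('x \<Rightarrow> 'v::real_inner) set \<Rightarrow> real \<Rightarrow> bool" where
  "has_edge N xs H \<gamma> \<longleftrightarrow> 0 \<le> \<gamma> \<and> \<gamma> \<le> 1 \<and>
     (\<forall>g. \<exists>h \<in> H.
        (l2_norm N xs h \<noteq> 0 \<and> l2_inner N xs g h \<ge> \<gamma> * l2_norm N xs g * l2_norm N xs h)
      \<or> (l2_norm N xs (g - h))\<^sup>2 \<le> (1 - \<gamma>\<^sup>2) * (l2_norm N xs g)\<^sup>2)"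

definition is_projection ::
  "nat \<Rightarrow> (nat \<Rightarrow> 'x) \<Rightarrow> ('x \<Rightarrow> 'v::real_inner) set \<Rightarrow> ('x \<Rightarrow> 'v) \<Rightarrow> ('x \<Rightarrow> 'v) \<Rightarrow> bool" where
  "is_projection N xs H g h \<longleftrightarrow> h \<in> H \<and>
     ((l2_norm N xs h \<noteq> 0 \<and>
       (\<forall>h' \<in> H. l2_norm N xs h' \<noteq> 0 \<longrightarrow>
          l2_inner N xs g h' / l2_norm N xs h' \<le> l2_inner N xs g h / l2_norm N xs h))
    \<or> ((\<forall>c::real. \<forall>h' \<in> H. (\<lambda>x. c *\<^sub>R h' x) \<in> H) \<and>
       (\<forall>h' \<in> H. (l2_norm N xs (g - h))\<^sup>2 \<le> (l2_norm N xs (g - h'))\<^sup>2)))"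

end

theory Submission
  imports Defs
begin

lemma ip_sym: "l2_inner N xs f g = l2_inner N xs g f"
  unfolding l2_inner_def by (simp add: inner_commute)

lemma ip_nonneg: "0 \<le> l2_inner N xs f f"
  unfolding l2_inner_def by (auto intro!: sum_nonneg divide_nonneg_nonneg)

lemma norm_sq: "(l2_norm N xs f)\<^sup>2 = l2_inner N xs f f"
proof -
  have "0 \<le> l2_inner N xs f f" by (rule ip_nonneg)
  then show ?thesis unfolding l2_norm_def by (rule real_sqrt_pow2)
qed

lemma norm_nonneg: "0 \<le> l2_norm N xs f"
  unfolding l2_norm_def using ip_nonneg[of N xs f] by simp

lemma ip_diff_left: "l2_inner N xs (f - g) k = l2_inner N xs f k - l2_inner N xs g k"
  unfolding l2_inner_def by (simp add: inner_diff_left sum_subtractf algebra_simps)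

lemma ip_diff_right: "l2_inner N xs k (f - g) = l2_inner N xs k f - l2_inner N xs k g"
  unfolding l2_inner_def by (simp add: inner_diff_right sum_subtractf algebra_simps)

lemma ip_scale_left: "l2_inner N xs (\<lambda>x. c *\<^sub>R f x) k = c * l2_inner N xs f k"
  unfolding l2_inner_def by (simp add: sum_distrib_left algebra_simps)

lemma ip_scale_right: "l2_inner N xs k (\<lambda>x. c *\<^sub>R f x) = c * l2_inner N xs k f"
  unfolding l2_inner_def by (simp add: sum_distrib_left algebra_simps)

lemma zero_norm:
  assumes "l2_inner N xs h h = 0" shows "l2_inner N xs g h = 0"
proof (cases "N = 0")
  case True then show ?thesis unfolding l2_inner_def by simp
next
  case False
  then have "(\<Sum>n<N. inner (h (xs n)) (h (xs n))) = 0"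
    using assms unfolding l2_inner_def by simp
  then have "\<forall>n\<in>{..<N}. inner (h (xs n)) (h (xs n)) = 0"
    by (subst (asm) sum_nonneg_eq_0_iff) auto
  then show ?thesis unfolding l2_inner_def by simp
qed

lemma quad:
  "l2_inner N xs (g - (\<lambda>x. c *\<^sub>R k x)) (g - (\<lambda>x. c *\<^sub>R k x))
   = l2_inner N xs g g - 2 * c * l2_inner N xs g k + c\<^sup>2 * l2_inner N xs k k"
  by (simp add: ip_diff_left ip_diff_right ip_scale_left ip_scale_right
      ip_sym[of N xs k g] power2_eq_square algebra_simps)

lemma factB:
  "l2_inner N xs g g - l2_inner N xs (g - (\<lambda>x. c *\<^sub>R k x)) (g - (\<lambda>x. c *\<^sub>R k x))
   \<le> (l2_inner N xs g k)\<^sup>2 / l2_inner N xs k k"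
proof (cases "l2_inner N xs k k = 0")
  case True
  then show ?thesis using zero_norm[OF True, of g] by (simp add: quad)
next
  case False
  then have p: "l2_inner N xs k k > 0" using ip_nonneg[of N xs k] by linarith
  have "0 \<le> (c * l2_inner N xs k k - l2_inner N xs g k)\<^sup>2" by simp
  then have "2 * c * l2_inner N xs g k - c\<^sup>2 * l2_inner N xs k k
     \<le> (l2_inner N xs g k)\<^sup>2 / l2_inner N xs k k"
    using p by (simp add: field_simps power2_eq_square)
  then show ?thesis by (simp add: quad)
qed

lemma proj_bound:
  assumes edge: "has_edge N xs H \<gamma>" and pr: "is_projection N xs H g h"
  shows "\<gamma>\<^sup>2 * l2_inner N xs g g \<le> (l2_inner N xs g h)\<^sup>2 / l2_inner N xs h h"
proof -
  let ?I = "l2_inner N xs"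
  have P0: "0 \<le> (?I g h)\<^sup>2 / ?I h h" using ip_nonneg[of N xs h] by simp
  have g0: "0 \<le> \<gamma>" using edge unfolding has_edge_def by simp
  obtain h' where h'H: "h' \<in> H" and alt:
    "(l2_norm N xs h' \<noteq> 0 \<and> ?I g h' \<ge> \<gamma> * l2_norm N xs g * l2_norm N xs h')
     \<or> (l2_norm N xs (g - h'))\<^sup>2 \<le> (1 - \<gamma>\<^sup>2) * (l2_norm N xs g)\<^sup>2"
    using edge unfolding has_edge_def by blast
  have alt2: "?I (g - h') (g - h') \<le> (1 - \<gamma>\<^sup>2) * ?I g g"
    if "(l2_norm N xs (g - h'))\<^sup>2 \<le> (1 - \<gamma>\<^sup>2) * (l2_norm N xs g)\<^sup>2"
    using that by (simp add: norm_sq)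
  have der: "(l2_norm N xs h' \<noteq> 0 \<and> ?I g h' \<ge> \<gamma> * l2_norm N xs g * l2_norm N xs h')
      \<or> \<gamma>\<^sup>2 * ?I g g \<le> 0"
  proof (cases "(l2_norm N xs (g - h'))\<^sup>2 \<le> (1 - \<gamma>\<^sup>2) * (l2_norm N xs g)\<^sup>2")
    case False then show ?thesis using alt by blast
  next
    case True
    have e: "\<gamma>\<^sup>2 * ?I g g + ?I h' h' \<le> 2 * ?I g h'"
      using alt2[OF True] by (simp add: ip_diff_left ip_diff_right ip_sym[of N xs h' g] algebra_simps)
    show ?thesis
    proof (cases "?I h' h' = 0")
      case True then show ?thesis using e zero_norm[OF True, of g] by simp
    next
      case False
      then have nz: "l2_norm N xs h' \<noteq> 0" using norm_sq[of N xs h'] by auto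
      have "0 \<le> (\<gamma> * l2_norm N xs g - l2_norm N xs h')\<^sup>2" by simp
      then have "2 * (\<gamma> * l2_norm N xs g * l2_norm N xs h') \<le> \<gamma>\<^sup>2 * ?I g g + ?I h' h'"
        by (simp add: power2_eq_square norm_sq[symmetric] algebra_simps)
      then show ?thesis using e nz by simp
    qed
  qed
  from pr have hH: "h \<in> H" unfolding is_projection_def by simp
  from pr consider
    (max) "l2_norm N xs h \<noteq> 0" "\<forall>h' \<in> H. l2_norm N xs h' \<noteq> 0 \<longrightarrow>
          ?I g h' / l2_norm N xs h' \<le> ?I g h / l2_norm N xs h"
   | (min) "\<forall>c::real. \<forall>h' \<in> H. (\<lambda>x. c *\<^sub>R h' x) \<in> H"
           "\<forall>h' \<in> H. (l2_norm N xs (g - h))\<^sup>2 \<le> (l2_norm N xs (g - h'))\<^sup>2"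
    unfolding is_projection_def by blast
  then show ?thesis
  proof cases
    case max
    show ?thesis
    proof (cases "\<gamma>\<^sup>2 * ?I g g \<le> 0")
      case True then show ?thesis using P0 by linarith
    next
      case False
      then have nz: "l2_norm N xs h' \<noteq> 0" and ge: "?I g h' \<ge> \<gamma> * l2_norm N xs g * l2_norm N xs h'"
        using der by auto
      have pos': "l2_norm N xs h' > 0" using nz norm_nonneg[of N xs h'] by linarith
      have pos: "l2_norm N xs h > 0" using max(1) norm_nonneg[of N xs h] by linarith
      have "\<gamma> * l2_norm N xs g \<le> ?I g h' / l2_norm N xs h'"
        using ge pos' by (simp add: field_simps)
      also have "\<dots> \<le> ?I g h / l2_norm N xs h" using max(2) h'H nz by blast
      finally have a: "\<gamma> * l2_norm N xs g \<le> ?I g h / l2_norm N xs h" .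
      have b: "0 \<le> \<gamma> * l2_norm N xs g" using g0 norm_nonneg[of N xs g] by simp
      have "(\<gamma> * l2_norm N xs g)\<^sup>2 \<le> (?I g h / l2_norm N xs h)\<^sup>2"
        using power_mono[OF a b] .
      then show ?thesis by (simp add: power_mult_distrib power_divide norm_sq)
    qed
  next
    case min
    have A: "?I g g - ?I (g - h) (g - h) \<le> (?I g h)\<^sup>2 / ?I h h"
      using factB[of N xs g 1 h] by simp
    have M: "?I (g - h) (g - h) \<le> ?I (g - k) (g - k)" if "k \<in> H" for k
      using min(2) that by (simp add: norm_sq)
    show ?thesis
    proof (cases "(l2_norm N xs (g - h'))\<^sup>2 \<le> (1 - \<gamma>\<^sup>2) * (l2_norm N xs g)\<^sup>2")
      case True
      have "?I (g - h) (g - h) \<le> (1 - \<gamma>\<^sup>2) * ?I g g" using M[OF h'H] alt2[OF True] by linarith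
      then show ?thesis using A by (simp add: algebra_simps)
    next
      case False
      then have nz: "l2_norm N xs h' \<noteq> 0" and ge: "?I g h' \<ge> \<gamma> * l2_norm N xs g * l2_norm N xs h'"
        using alt by auto
      have kk: "?I h' h' > 0"
      proof -
        have "(l2_norm N xs h')\<^sup>2 > 0" using nz by simp
        then show ?thesis using norm_sq[of N xs h'] by simp
      qed
      define c where "c = ?I g h' / ?I h' h'"
      have "?I (g - h) (g - h) \<le> ?I (g - (\<lambda>x. c *\<^sub>R h' x)) (g - (\<lambda>x. c *\<^sub>R h' x))"
        using M min(1) h'H by blast
      also have "\<dots> = ?I g g - (?I g h')\<^sup>2 / ?I h' h'"
        unfolding quad c_def using kk by (simp add: field_simps power2_eq_square)
      finally have B: "(?I g h')\<^sup>2 / ?I h' h' \<le> (?I g h)\<^sup>2 / ?I h h" using A by linarith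
      have b: "0 \<le> \<gamma> * l2_norm N xs g * l2_norm N xs h'"
        using g0 norm_nonneg[of N xs g] norm_nonneg[of N xs h'] by simp
      have "(\<gamma> * l2_norm N xs g * l2_norm N xs h')\<^sup>2 \<le> (?I g h')\<^sup>2"
        using power_mono[OF ge b] .
      then have "\<gamma>\<^sup>2 * ?I g g * ?I h' h' \<le> (?I g h')\<^sup>2"
        by (simp add: power_mult_distrib norm_sq)
      then have "\<gamma>\<^sup>2 * ?I g g \<le> (?I g h')\<^sup>2 / ?I h' h'"
        using kk by (simp add: field_simps)
      then show ?thesis using B by linarith
    qed
  qed
qed

lemma smooth_step:
  assumes sm: "strongly_smooth N xs Lam R" and Lp: "Lam > 0"
    and gs: "g \<in> subgradients N xs R f"
    and f'd: "f' = (\<lambda>x. f x - ((1 / Lam) * (l2_inner N xs h g / (l2_norm N xs h)\<^sup>2)) *\<^sub>R h x)"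
  shows "R f' \<le> R f - (l2_inner N xs g h)\<^sup>2 / (2 * Lam * l2_inner N xs h h)"
proof -
  let ?I = "l2_inner N xs"
  define a where "a = (1 / Lam) * (?I h g / ?I h h)"
  have d: "f' - f = (\<lambda>x. (- a) *\<^sub>R h x)"
    unfolding f'd a_def norm_sq by (rule ext) simp
  have "R f' \<le> R f + ?I g (f' - f) + Lam / 2 * (l2_norm N xs (f' - f))\<^sup>2"
    using sm gs unfolding strongly_smooth_def by blast
  also have "\<dots> = R f - a * ?I g h + Lam / 2 * a\<^sup>2 * ?I h h"
    unfolding d norm_sq ip_scale_left ip_scale_right by (simp add: power2_eq_square)
  also have "\<dots> = R f - (?I g h)\<^sup>2 / (2 * Lam * ?I h h)"
  proof (cases "?I h h = 0")
    case True then show ?thesis unfolding a_def by simp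
  next
    case False
    then show ?thesis unfolding a_def using Lp
      by (simp add: ip_sym[of N xs h g] field_simps power2_eq_square)
  qed
  finally show ?thesis .
qed

lemma convex_bound:
  assumes sc: "strongly_convex N xs lam R" and lp: "lam > 0"
    and gs: "g \<in> subgradients N xs R f"
  shows "R f - l2_inner N xs g g / (2 * lam) \<le> R fs"
proof -
  let ?I = "l2_inner N xs"
  define d where "d = fs - f"
  have "R fs \<ge> R f + ?I g d + lam / 2 * (l2_norm N xs d)\<^sup>2"
    using sc gs unfolding strongly_convex_def d_def by blast
  moreover have "0 \<le> ?I (g - (\<lambda>x. (- lam) *\<^sub>R d x)) (g - (\<lambda>x. (- lam) *\<^sub>R d x))"
    by (rule ip_nonneg)
  then have "0 \<le> ?I g g + 2 * lam * ?I g d + lam\<^sup>2 * ?I d d" unfolding quad by simp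
  then have "- ?I g g / (2 * lam) \<le> ?I g d + lam / 2 * ?I d d"
    using lp by (simp add: field_simps power2_eq_square)
  ultimately show ?thesis by (simp add: norm_sq)
qed

theorem theorem3:
  fixes N :: nat and xs :: "nat \<Rightarrow> 'x"
    and R :: "('x \<Rightarrow> 'v::real_inner) \<Rightarrow> real"
    and H :: "('x \<Rightarrow> 'v) set"
    and lam Lam \<gamma> :: real
    and fstar :: "'x \<Rightarrow> 'v"
    and f grad h :: "nat \<Rightarrow> ('x \<Rightarrow> 'v)"
    and T :: nat
  assumes "N > 0"
    and "lam > 0" and "Lam > 0"
    and "strongly_convex N xs lam R"
    and "strongly_smooth N xs Lam R"
    and "has_edge N xs H \<gamma>"
    and "\<forall>g. R fstar \<le> R g"
    and "\<forall>t \<in> {1..T}. grad t \<in> subgradients N xs R (f (t - 1))"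
    and "\<forall>t \<in> {1..T}. is_projection N xs H (grad t) (h t)"
    and "\<forall>t \<in> {1..T}. f t = (\<lambda>x. f (t - 1) x -
           ((1 / Lam) * (l2_inner N xs (h t) (grad t) / (l2_norm N xs (h t))\<^sup>2)) *\<^sub>R h t x)"
  shows "R (f T) - R fstar \<le> (1 - \<gamma>\<^sup>2 * lam / Lam) ^ T * (R (f 0) - R fstar)"
proof -
  define c where "c = 1 - \<gamma>\<^sup>2 * lam / Lam"
  define e where "e t = R (f t) - R fstar" for t
  have e0: "\<And>t. e t \<ge> 0" unfolding e_def using assms(7) by simp
  have step: "e t \<le> c * e (t - 1)" if t: "t \<in> {1..T}" for t
  proof -
    let ?I = "l2_inner N xs"
    let ?g = "grad t" and ?h = "h t"
    have gs: "?g \<in> subgradients N xs R (f (t - 1))" using assms(8) t by blast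
    have s1: "R (f t) \<le> R (f (t-1)) - (?I ?g ?h)\<^sup>2 / (2 * Lam * ?I ?h ?h)"
      by (rule smooth_step[OF assms(5) assms(3) gs]) (use assms(10) t in blast)
    have pb: "\<gamma>\<^sup>2 * ?I ?g ?g \<le> (?I ?g ?h)\<^sup>2 / ?I ?h ?h"
      using proj_bound[OF assms(6)] assms(9) t by blast
    have cb: "R (f (t-1)) - ?I ?g ?g / (2 * lam) \<le> R fstar"
      using convex_bound[OF assms(4) assms(2) gs] .
    have eq: "(?I ?g ?h)\<^sup>2 / (2 * Lam * ?I ?h ?h) = ((?I ?g ?h)\<^sup>2 / ?I ?h ?h) / (2 * Lam)"
      by simp
    have "\<gamma>\<^sup>2 * ?I ?g ?g / (2 * Lam) \<le> (?I ?g ?h)\<^sup>2 / (2 * Lam * ?I ?h ?h)"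
      unfolding eq using pb assms(3) by (intro divide_right_mono) auto
    moreover have "2 * lam * e (t-1) \<le> ?I ?g ?g"
      using cb assms(2) unfolding e_def by (simp add: field_simps)
    then have "\<gamma>\<^sup>2 * (2 * lam * e (t-1)) \<le> \<gamma>\<^sup>2 * ?I ?g ?g"
      by (simp add: mult_left_mono)
    then have "\<gamma>\<^sup>2 * lam * e (t-1) / Lam \<le> \<gamma>\<^sup>2 * ?I ?g ?g / (2 * Lam)"
      using assms(3) by (simp add: field_simps)
    ultimately show ?thesis using s1 unfolding e_def c_def by (simp add: algebra_simps)
  qed
  have "t \<le> T \<Longrightarrow> e t \<le> c ^ t * e 0" for t
  proof (induction t)
    case 0 then show ?case by simp
  next
    case (Suc t)
    have st: "e (Suc t) \<le> c * e t" using step[of "Suc t"] Suc.prems by simp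
    show ?case
    proof (cases "c \<ge> 0")
      case True
      have "c * e t \<le> c * (c ^ t * e 0)" using Suc True by (simp add: mult_left_mono)
      then show ?thesis using st by simp
    next
      case False
      have "e 1 \<le> c * e 0" using step[of 1] Suc.prems by simp
      then have "e 0 = 0" using e0[of 1] e0[of 0] False
      proof -
        have "c * e 0 \<le> 0" using False e0[of 0] by (simp add: mult_nonpos_nonneg)
        then have "c * e 0 = 0" using \<open>e 1 \<le> c * e 0\<close> e0[of 1] by linarith
        then show ?thesis using False by simp
      qed
      moreover have "c * e t \<le> 0" using False e0[of t] by (simp add: mult_nonpos_nonneg)
      ultimately show ?thesis using st by simp
    qed
  qed
  then show ?thesis unfolding e_def c_def by simp
qed

end
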